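(* Every simple Yetter-Drinfeld module $V$ over $H=B(n,w,\gamma)$ is finite-dimensional.
   Context: $\Bbbk$ is an algebraically closed field of characteristic $0$; $n,w$ are positive integers and $\gamma\in\Bbbk$ is a primitive $n$-th root of unity. $H=B(n,w,\gamma)$ is the Hopf algebra generated by $x^{\pm1},g,y$ with relations $xx^{-1}=x^{-1}x=1$, $xg=gx$, $xy=yx$, $yg=\gamma gy$, $y^n=1-x^w=1-g^n$, with $\Delta(x)=x\otimes x$, $\Delta(g)=g\otimes g$, $\Delta(y)=y\otimes g+1\otimes y$, $\varepsilon(x)=\varepsilon(g)=1$, $\varepsilon(y)=0$, $S(x)=x^{-1}$, $S(g)=g^{-1}$, $S(y)=-yg^{-1}$. A (left-left) Yetter-Drinfeld module over $H$ is a left $H$-module and left $H$-comodule $(V,\cdot,\delta)$, $\delta(v)=v_{(-1)}\otimes v_{(0)}$, such that $\delta(h\cdot v)=h_{(1)}v_{(-1)}S(h_{(3)})\otimes h_{(2)}\cdot v_{(0)}$ for all $h\in H$, $v\in V$; simple means no nonzero proper Yetter-Drinfeld submodules. *)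

theory Defs
  imports "HOL-Library.Poly_Mapping" "HOL-Computational_Algebra.Polynomial"
begin

text \<open>
  Basis (PBW): x^a g^b y^c with a an integer, 0 <= b < n, 0 <= c < n; the basis element
  x^a g^b y^c is indexed by the triple (a,b,c).  Elements of H are finitely supported
  coefficient functions on such triples (type Bidx =>0 'k); elements of H (x) H are
  finitely supported functions on pairs of triples.  All structure maps are derived
  from the defining relations: x central, y g = gamma g y, g^n = x^w, y^n = 1 - x^w.
\<close>

type_synonym Bidx = "int \<times> nat \<times> nat"

definition valid :: "nat \<Rightarrow> Bidx set" where
  "valid n = {(a, b, c). b < n \<and> c < n}"

definition Hset :: "nat \<Rightarrow> (Bidx \<Rightarrow>\<^sub>0 'k::field) set" where
  "Hset n = {h. Poly_Mapping.keys h \<subseteq> valid n}"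

definition cmul :: "'k::field \<Rightarrow> ('a \<Rightarrow>\<^sub>0 'k) \<Rightarrow> ('a \<Rightarrow>\<^sub>0 'k)" where
  "cmul c p = Poly_Mapping.map (\<lambda>z. c * z) p"

text \<open>Normal form of x^a g^b y^c for arbitrary b, c, using g^n = x^w and y^n = 1 - x^w.\<close>
definition mon :: "nat \<Rightarrow> nat \<Rightarrow> int \<Rightarrow> nat \<Rightarrow> nat \<Rightarrow> (Bidx \<Rightarrow>\<^sub>0 'k::field)" where
  "mon n w a b c =
     (\<Sum>i\<le>c div n. Poly_Mapping.single
        (a + int w * int (b div n) + int w * int i, b mod n, c mod n)
        ((-1) ^ i * of_nat (c div n choose i)))"

definition oneH :: "(Bidx \<Rightarrow>\<^sub>0 'k::field)" where
  "oneH = Poly_Mapping.single (0, 0, 0) 1"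

definition bprod :: "nat \<Rightarrow> nat \<Rightarrow> 'k::field \<Rightarrow> Bidx \<Rightarrow> Bidx \<Rightarrow> (Bidx \<Rightarrow>\<^sub>0 'k)" where
  "bprod n w \<gamma> u v = (case u of (a, b, c) \<Rightarrow> case v of (a', b', c') \<Rightarrow>
       cmul (\<gamma> ^ (c * b')) (mon n w (a + a') (b + b') (c + c')))"

definition lin2 :: "('a \<Rightarrow> 'b \<Rightarrow> ('c \<Rightarrow>\<^sub>0 'k::field)) \<Rightarrow> ('a \<Rightarrow>\<^sub>0 'k) \<Rightarrow> ('b \<Rightarrow>\<^sub>0 'k) \<Rightarrow> ('c \<Rightarrow>\<^sub>0 'k)" where
  "lin2 f p q = (\<Sum>u\<in>Poly_Mapping.keys p. \<Sum>v\<in>Poly_Mapping.keys q. cmul (Poly_Mapping.lookup p u * Poly_Mapping.lookup q v) (f u v))"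

definition hmul :: "nat \<Rightarrow> nat \<Rightarrow> 'k::field \<Rightarrow> (Bidx \<Rightarrow>\<^sub>0 'k) \<Rightarrow> (Bidx \<Rightarrow>\<^sub>0 'k) \<Rightarrow> (Bidx \<Rightarrow>\<^sub>0 'k)" where
  "hmul n w \<gamma> = lin2 (bprod n w \<gamma>)"

definition tens :: "('a \<Rightarrow>\<^sub>0 'k::field) \<Rightarrow> ('b \<Rightarrow>\<^sub>0 'k) \<Rightarrow> ('a \<times> 'b \<Rightarrow>\<^sub>0 'k)" where
  "tens p q = (\<Sum>u\<in>Poly_Mapping.keys p. \<Sum>v\<in>Poly_Mapping.keys q. Poly_Mapping.single (u, v) (Poly_Mapping.lookup p u * Poly_Mapping.lookup q v))"

definition tmul :: "nat \<Rightarrow> nat \<Rightarrow> 'k::field \<Rightarrow> (Bidx \<times> Bidx \<Rightarrow>\<^sub>0 'k) \<Rightarrow> (Bidx \<times> Bidx \<Rightarrow>\<^sub>0 'k) \<Rightarrow> (Bidx \<times> Bidx \<Rightarrow>\<^sub>0 'k)" where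
  "tmul n w \<gamma> = lin2 (\<lambda>(u1, u2) (v1, v2). tens (bprod n w \<gamma> u1 v1) (bprod n w \<gamma> u2 v2))"

definition genx :: "nat \<Rightarrow> nat \<Rightarrow> (Bidx \<Rightarrow>\<^sub>0 'k::field)" where "genx n w = mon n w 1 0 0"
definition geng :: "nat \<Rightarrow> nat \<Rightarrow> (Bidx \<Rightarrow>\<^sub>0 'k::field)" where "geng n w = mon n w 0 1 0"
definition geny :: "nat \<Rightarrow> nat \<Rightarrow> (Bidx \<Rightarrow>\<^sub>0 'k::field)" where "geny n w = mon n w 0 0 1"

definition Delta :: "nat \<Rightarrow> nat \<Rightarrow> 'k::field \<Rightarrow> Bidx \<Rightarrow> (Bidx \<times> Bidx \<Rightarrow>\<^sub>0 'k)" where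
  "Delta n w \<gamma> u = (case u of (a, b, c) \<Rightarrow>
     tmul n w \<gamma> (tens (mon n w a b 0) (mon n w a b 0))
       ((tmul n w \<gamma> (tens (geny n w) (geng n w) + tens oneH (geny n w)) ^^ c) (tens oneH oneH)))"

definition DeltaH :: "nat \<Rightarrow> nat \<Rightarrow> 'k::field \<Rightarrow> (Bidx \<Rightarrow>\<^sub>0 'k) \<Rightarrow> (Bidx \<times> Bidx \<Rightarrow>\<^sub>0 'k)" where
  "DeltaH n w \<gamma> h = (\<Sum>u\<in>Poly_Mapping.keys h. cmul (Poly_Mapping.lookup h u) (Delta n w \<gamma> u))"

definition eps :: "Bidx \<Rightarrow> 'k::field" where
  "eps u = (case u of (a, b, c) \<Rightarrow> if c = 0 then 1 else 0)"

text \<open>Antipode on basis elements: S(x^a g^b y^c) = S(y)^c S(g)^b S(x)^a, with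
  S(g) = g^(-1) = x^(-w) g^(n-1), S(y) = - y g^(-1), S(x)^a = x^(-a).\<close>
definition antipode :: "nat \<Rightarrow> nat \<Rightarrow> 'k::field \<Rightarrow> Bidx \<Rightarrow> (Bidx \<Rightarrow>\<^sub>0 'k)" where
  "antipode n w \<gamma> u = (case u of (a, b, c) \<Rightarrow>
     (let Sg = mon n w (- int w) (n - 1) 0;
          Sy = cmul (-1) (hmul n w \<gamma> (geny n w) Sg)
      in hmul n w \<gamma> (hmul n w \<gamma> ((hmul n w \<gamma> Sy ^^ c) oneH) ((hmul n w \<gamma> Sg ^^ b) oneH))
           (mon n w (- a) 0 0)))"

text \<open>A left H-comodule structure is given by coact: delta(v) = sum over u of u (x) coact v u.\<close>
definition act :: "('k::field \<Rightarrow> 'v::ab_group_add \<Rightarrow> 'v) \<Rightarrow> (Bidx \<Rightarrow> 'v \<Rightarrow> 'v) \<Rightarrow> (Bidx \<Rightarrow>\<^sub>0 'k) \<Rightarrow> 'v \<Rightarrow> 'v" where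
  "act scale actb h v = (\<Sum>u\<in>Poly_Mapping.keys h. scale (Poly_Mapping.lookup h u) (actb u v))"

definition csupp :: "('v::ab_group_add \<Rightarrow> Bidx \<Rightarrow> 'v) \<Rightarrow> 'v \<Rightarrow> Bidx set" where
  "csupp coact v = {u. coact v u \<noteq> 0}"

definition YD_module ::
  "nat \<Rightarrow> nat \<Rightarrow> 'k::field \<Rightarrow> ('k \<Rightarrow> 'v::ab_group_add \<Rightarrow> 'v) \<Rightarrow> (Bidx \<Rightarrow> 'v \<Rightarrow> 'v) \<Rightarrow> ('v \<Rightarrow> Bidx \<Rightarrow> 'v) \<Rightarrow> bool" where
  "YD_module n w \<gamma> scale actb coact \<longleftrightarrow>
     vector_space scale
     \<comment> \<open>left H-module\<close>
     \<and> (\<forall>u\<in>valid n. Vector_Spaces.linear scale scale (actb u))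
     \<and> (\<forall>v. act scale actb oneH v = v)
     \<and> (\<forall>h\<in>Hset n. \<forall>h'\<in>Hset n. \<forall>v.
           act scale actb (hmul n w \<gamma> h h') v = act scale actb h (act scale actb h' v))
     \<comment> \<open>left H-comodule\<close>
     \<and> (\<forall>v. finite (csupp coact v) \<and> csupp coact v \<subseteq> valid n)
     \<and> (\<forall>u. Vector_Spaces.linear scale scale (\<lambda>v. coact v u))
     \<and> (\<forall>v. (\<Sum>u\<in>csupp coact v. scale (eps u) (coact v u)) = v)
     \<and> (\<forall>v u1 u2. (\<Sum>u\<in>csupp coact v. scale (Poly_Mapping.lookup (Delta n w \<gamma> u) (u1, u2)) (coact v u))
                   = coact (coact v u1) u2)
     \<comment> \<open>Yetter-Drinfeld compatibility: delta(h.v) = h1 v(-1) S(h3) (x) h2.v(0)\<close>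
     \<and> (\<forall>h\<in>Hset n. \<forall>v s.
          coact (act scale actb h v) s =
          (\<Sum>(p, q)\<in>Poly_Mapping.keys (DeltaH n w \<gamma> h). \<Sum>(p1, p2)\<in>Poly_Mapping.keys (Delta n w \<gamma> p). \<Sum>t\<in>csupp coact v.
              scale (Poly_Mapping.lookup (DeltaH n w \<gamma> h) (p, q) * Poly_Mapping.lookup (Delta n w \<gamma> p) (p1, p2)
                     * Poly_Mapping.lookup (hmul n w \<gamma> (hmul n w \<gamma> (Poly_Mapping.single p1 1) (Poly_Mapping.single t 1))
                                 (antipode n w \<gamma> q)) s)
                    (actb p2 (coact v t))))"

definition YD_submodule ::
  "nat \<Rightarrow> ('k::field \<Rightarrow> 'v::ab_group_add \<Rightarrow> 'v) \<Rightarrow> (Bidx \<Rightarrow> 'v \<Rightarrow> 'v) \<Rightarrow> ('v \<Rightarrow> Bidx \<Rightarrow> 'v) \<Rightarrow> 'v set \<Rightarrow> bool" where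
  "YD_submodule n scale actb coact W \<longleftrightarrow>
     module.subspace scale W
     \<and> (\<forall>u\<in>valid n. \<forall>x\<in>W. actb u x \<in> W)
     \<and> (\<forall>x\<in>W. \<forall>u. coact x u \<in> W)"

definition simple_YD ::
  "nat \<Rightarrow> nat \<Rightarrow> 'k::field \<Rightarrow> ('k \<Rightarrow> 'v::ab_group_add \<Rightarrow> 'v) \<Rightarrow> (Bidx \<Rightarrow> 'v \<Rightarrow> 'v) \<Rightarrow> ('v \<Rightarrow> Bidx \<Rightarrow> 'v) \<Rightarrow> bool" where
  "simple_YD n w \<gamma> scale actb coact \<longleftrightarrow>
     YD_module n w \<gamma> scale actb coact
     \<and> (UNIV :: 'v set) \<noteq> {0}
     \<and> (\<forall>W. YD_submodule n scale actb coact W \<longrightarrow> W = {0} \<or> W = UNIV)"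

definition alg_closed :: "'k::field itself \<Rightarrow> bool" where
  "alg_closed _ \<longleftrightarrow> (\<forall>p :: 'k poly. 0 < degree p \<longrightarrow> (\<exists>z. poly p z = 0))"

end

theory Submission
  imports Defs
begin

lemma lin_add: "Vector_Spaces.linear s1 s2 f \<Longrightarrow> f (x + y) = f x + f y"
  by (metis module_hom.add module_hom_iff_linear)
lemma lin_scale: "Vector_Spaces.linear s1 s2 f \<Longrightarrow> f (s1 c x) = s2 c (f x)"
  by (metis module_hom.scale module_hom_iff_linear)
lemma lin_sum: "Vector_Spaces.linear s1 s2 f \<Longrightarrow> f (sum g A) = (\<Sum>a\<in>A. f (g a))"
  by (metis module_hom.sum module_hom_iff_linear)
lemma lin_zero: "Vector_Spaces.linear s1 s2 f \<Longrightarrow> f 0 = 0"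
  by (metis module_hom.zero module_hom_iff_linear)
lemma lin_diff: "Vector_Spaces.linear s1 s2 f \<Longrightarrow> f (x - y) = f x - f y"
  by (metis module_hom.diff module_hom_iff_linear)
lemma lin_span_image: "Vector_Spaces.linear s1 s2 f \<Longrightarrow> f ` module.span s1 S = module.span s2 (f ` S)"
  by (metis module_hom.span_image module_hom_iff_linear)

definition pa :: "('k::field \<Rightarrow> 'v::ab_group_add \<Rightarrow> 'v) \<Rightarrow> (int \<Rightarrow> 'v \<Rightarrow> 'v) \<Rightarrow> 'k poly \<Rightarrow> 'v \<Rightarrow> 'v" where
  "pa sc E q v = (\<Sum>i<Suc (degree q). sc (coeff q i) (E (int i) v))"

context vector_space
begin

context
  fixes E :: "int \<Rightarrow> 'b \<Rightarrow> 'b"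
  assumes Elin: "\<And>a. Vector_Spaces.linear scale scale (E a)"
    and E0: "\<And>v. E 0 v = v"
    and Eadd: "\<And>a b v. E (a + b) v = E a (E b v)"
begin

lemma pa_upto: "degree q < N \<Longrightarrow> pa scale E q v = (\<Sum>i<N. scale (coeff q i) (E (int i) v))"
  unfolding pa_def
  by (rule sum.mono_neutral_right[symmetric]) (auto simp: coeff_eq_0)

lemma pa_add: "pa scale E (p + q) v = pa scale E p v + pa scale E q v"
proof -
  define N where "N = Suc (max (degree p) (degree q))"
  have "degree (p + q) < N" unfolding N_def using degree_add_le_max[of p q] by linarith
  then show ?thesis
    using pa_upto[of "p+q" N] pa_upto[of p N] pa_upto[of q N]
    by (simp add: N_def scale_left_distrib sum.distrib)
qed

lemma pa_diff: "pa scale E (p - q) v = pa scale E p v - pa scale E q v"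
proof -
  define N where "N = Suc (max (degree p) (degree q))"
  have "degree (p - q) < N" unfolding N_def using degree_diff_le_max[of p q] by linarith
  then show ?thesis
    using pa_upto[of "p-q" N] pa_upto[of p N] pa_upto[of q N]
    by (simp add: N_def scale_left_diff_distrib sum_subtractf)
qed

lemma pa_smult: "pa scale E (smult c p) v = scale c (pa scale E p v)"
proof -
  have "degree (smult c p) < Suc (degree p)" by (simp add: le_imp_less_Suc)
  then show ?thesis
    using pa_upto[of "smult c p" "Suc (degree p)"] pa_upto[of p "Suc (degree p)"]
    by (simp del: sum.lessThan_Suc add: scale_sum_right)
qed

lemma pa_pCons: "pa scale E (pCons a p) v = scale a v + E 1 (pa scale E p v)"
proof -
  have d: "degree (pCons a p) < Suc (Suc (degree p))"
    by (metis degree_pCons_le le_imp_less_Suc)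
  have "pa scale E (pCons a p) v = (\<Sum>i<Suc (Suc (degree p)). scale (coeff (pCons a p) i) (E (int i) v))"
    using pa_upto[OF d] .
  also have "\<dots> = scale a v + (\<Sum>i<Suc (degree p). scale (coeff p i) (E (int (Suc i)) v))"
    by (subst sum.lessThan_Suc_shift) (simp add: E0)
  also have "\<dots> = scale a v + (\<Sum>i<Suc (degree p). scale (coeff p i) (E 1 (E (int i) v)))"
    by (intro arg_cong2[where f="(+)"] refl sum.cong) (metis Eadd add.commute of_nat_Suc)
  also have "\<dots> = scale a v + E 1 (pa scale E p v)"
    unfolding pa_def by (simp only: lin_sum[OF Elin] lin_scale[OF Elin])
  finally show ?thesis .
qed

lemma pa_zero: "pa scale E 0 v = 0"
  unfolding pa_def by simp

lemma pa_const: "pa scale E [:c:] v = scale c v"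
  using pa_pCons[of c 0 v] by (simp add: pa_zero lin_zero[OF Elin])

lemma pa_mult: "pa scale E (p * q) v = pa scale E p (pa scale E q v)"
proof (induction p)
  case (pCons a p)
  have "pCons a p * q = smult a q + pCons 0 (p * q)" by simp
  then show ?case
    by (simp only: pa_add pa_smult pa_pCons pCons.IH) simp
qed (simp add: pa_zero)

lemma pa_monom: "pa scale E (monom 1 m) v = E (int m) v"
proof (induction m arbitrary: v)
  case 0 then show ?case by (simp add: monom_0 pa_const E0)
next
  case (Suc m)
  have "pa scale E (monom 1 (Suc m)) v = E 1 (E (int m) v)"
    by (simp add: monom_Suc pa_pCons Suc)
  also have "\<dots> = E (int (Suc m)) v" using Eadd[of 1 "int m"] by (simp add: add.commute)
  finally show ?case .
qed

lemma pa_lin: "pa scale E [:-c, 1:] v = E 1 v - scale c v"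
  using pa_pCons[of "-c" "[:1:]" v] by (simp add: pa_const)

lemma pa_stable:
  assumes "subspace U" "\<And>a x. x \<in> U \<Longrightarrow> E a x \<in> U" "x \<in> U"
  shows "pa scale E q x \<in> U"
  unfolding pa_def using assms by (intro subspace_sum subspace_scale) auto

lemma E_comm: "E a (E b v) = E b (E a v)"
  by (metis Eadd add.commute)

lemma key_lemma:
  assumes ac: "alg_closed TYPE('a)"
    and U: "subspace U" and Ustab: "\<And>a x. x \<in> U \<Longrightarrow> E a x \<in> U"
    and rep: "\<And>u. \<exists>N::nat. \<exists>q v'. v' \<in> U \<and> E (int N) u = v' + pa scale E q f"
    and sj: "\<And>c y. \<exists>u. y = E 1 u - scale c u"
  shows "f \<in> U"
proof -
  define J where "J = {p. pa scale E p f \<in> U}"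
  have Jr: "\<exists>r\<in>J. poly r c \<noteq> 0" if c0: "c \<noteq> 0" for c
  proof -
    obtain u where fu: "f = E 1 u - scale c u" using sj by blast
    obtain N q v' where v': "v' \<in> U" and Nu: "E (int N) u = v' + pa scale E q f" using rep by blast
    have "E (int N) f = E 1 (E (int N) u) - scale c (E (int N) u)"
      using fu by (simp add: lin_diff[OF Elin] lin_scale[OF Elin] E_comm)
    also have "\<dots> = (E 1 v' - scale c v') + pa scale E ([:-c,1:] * q) f"
      unfolding Nu pa_mult pa_lin by (simp add: lin_add[OF Elin] algebra_simps)
    finally have "pa scale E (monom 1 N - [:-c,1:] * q) f = E 1 v' - scale c v'"
      by (simp add: pa_diff pa_monom)
    moreover have "E 1 v' - scale c v' \<in> U"
      using U v' Ustab by (simp add: subspace_diff subspace_scale)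
    ultimately have "monom 1 N - [:-c,1:] * q \<in> J" unfolding J_def by simp
    moreover have "poly (monom 1 N - [:-c,1:] * q) c \<noteq> 0"
      using c0 by (simp add: poly_monom)
    ultimately show ?thesis by blast
  qed
  obtain r1 where "r1 \<in> J" "poly r1 1 \<noteq> 0" using Jr[of 1] by auto
  then have "r1 \<in> J \<and> r1 \<noteq> 0" by auto
  then obtain p where pJ: "p \<in> J" and p0: "p \<noteq> 0"
    and pmin: "\<And>q. q \<in> J \<and> q \<noteq> 0 \<Longrightarrow> degree p \<le> degree q"
    using ex_has_least_nat[of "\<lambda>p. p \<in> J \<and> p \<noteq> 0" r1 degree] by blast
  show ?thesis
  proof (cases "degree p = 0")
    case True
    then have pc: "p = [:coeff p 0:]" by (metis degree_0_id)
    with p0 have c0: "coeff p 0 \<noteq> 0" by auto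
    from pJ have "scale (coeff p 0) f \<in> U" unfolding J_def by (subst (asm) pc) (simp add: pa_const)
    then have "scale (inverse (coeff p 0)) (scale (coeff p 0) f) \<in> U" by (rule subspace_scale[OF U])
    then show ?thesis using c0 by simp
  next
    case False
    then obtain z where pz: "poly p z = 0" using ac unfolding alg_closed_def by blast
    then obtain q where pq: "p = [:-z,1:] * q" by (metis dvdE poly_eq_0_iff_dvd)
    with p0 have q0: "q \<noteq> 0" by auto
    have "degree p = degree [:-z,1:] + degree q" unfolding pq using q0 by (intro degree_mult_eq) auto
    then have dq: "degree q < degree p" by simp
    show ?thesis
    proof (cases "z = 0")
      case True
      have "pa scale E p f = E 1 (pa scale E q f)"
        using pq True by (simp add: pa_pCons)
      then have "E (-1) (E 1 (pa scale E q f)) \<in> U" using pJ Ustab unfolding J_def by simp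
      then have "q \<in> J" unfolding J_def using Eadd[of "-1" 1] E0 by simp
      then show ?thesis using pmin[of q] q0 dq by simp
    next
      case False
      obtain r where rJ: "r \<in> J" and rz: "poly r z \<noteq> 0" using Jr[OF False] by blast
      have pJ': "pa scale E p f \<in> U" using pJ unfolding J_def by simp
      have rU: "pa scale E r f \<in> U" using rJ unfolding J_def by simp
      have eq: "pa scale E (r mod p) f = pa scale E r f - pa scale E (r div p) (pa scale E p f)"
      proof -
        have "pa scale E (r mod p) f = pa scale E (r - (r div p) * p) f"
          by (rule arg_cong[where f="\<lambda>q. pa scale E q f"], rule minus_div_mult_eq_mod[symmetric])
        also have "\<dots> = pa scale E r f - pa scale E (r div p) (pa scale E p f)"
          by (rule trans[OF pa_diff], rule arg_cong[where f="\<lambda>z. _ - z"], rule pa_mult)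
        finally show ?thesis .
      qed
      have "pa scale E (r mod p) f \<in> U"
        unfolding eq by (rule subspace_diff[OF U rU pa_stable[OF U Ustab pJ']])
      then have mJ: "r mod p \<in> J" unfolding J_def by simp
      have "r mod p = 0"
      proof (rule ccontr)
        assume ne: "r mod p \<noteq> 0"
        have "degree (r mod p) < degree p" by (rule degree_mod_less'[OF p0 ne])
        moreover have "degree p \<le> degree (r mod p)" using pmin mJ ne by blast
        ultimately show False by simp
      qed
      then have "p dvd r" by auto
      then obtain k where "r = p * k" by blast
      then have "poly r z = 0" using pz by simp
      then show ?thesis using rz by simp
    qed
  qed
qed

lemma fin_gen_zero:
  assumes ac: "alg_closed TYPE('a)" and fin: "finite F"
    and sp: "span {E a f | a f. f \<in> F} = UNIV"
    and sj: "\<And>c y. \<exists>u. y = E 1 u - scale c u"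
  shows "(UNIV :: 'b set) = {0}"
  using fin sp
proof (induction F rule: finite_induct)
  case empty
  then show ?case by simp
next
  case (insert f F)
  define U where "U = span {E a g | a g. g \<in> F}"
  have U: "subspace U" unfolding U_def by simp
  have Ustab: "E a x \<in> U" if "x \<in> U" for a x
  proof -
    have "E a ` U = span (E a ` {E a g | a g. g \<in> F})" unfolding U_def by (rule lin_span_image[OF Elin])
    also have "\<dots> \<subseteq> U" unfolding U_def
      by (rule span_mono) (auto simp: Eadd[symmetric], blast)
    finally show ?thesis using that by blast
  qed
  define R where "R = {u. \<exists>N::nat. \<exists>q v'. v' \<in> U \<and> E (int N) u = v' + pa scale E q f}"
  have RS: "subspace R"
    unfolding subspace_def
  proof (intro conjI ballI allI)
    show "0 \<in> R" unfolding R_def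
      by (rule CollectI, rule exI[of _ 0], rule exI[of _ 0], rule exI[of _ 0])
         (simp add: E0 pa_zero U subspace_0)
  next
    fix x y assume "x \<in> R" "y \<in> R"
    then obtain N1 q1 v1 N2 q2 v2 where v1: "v1 \<in> U" "E (int N1) x = v1 + pa scale E q1 f"
      and v2: "v2 \<in> U" "E (int N2) y = v2 + pa scale E q2 f" unfolding R_def by blast
    have "E (int (N1 + N2)) (x + y) = E (int N2) (E (int N1) x) + E (int N1) (E (int N2) y)"
      by (simp add: lin_add[OF Elin] Eadd[symmetric] add.commute)
    also have "\<dots> = (E (int N2) v1 + E (int N1) v2) + pa scale E (monom 1 N2 * q1 + monom 1 N1 * q2) f"
      by (simp add: v1 v2 lin_add[OF Elin] pa_add pa_mult pa_monom)
    finally show "x + y \<in> R" unfolding R_def using v1 v2 Ustab U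
      by (intro CollectI exI[of _ "N1 + N2"] exI conjI) (auto intro: subspace_add)
  next
    fix c x assume "x \<in> R"
    then obtain N q v where v: "v \<in> U" "E (int N) x = v + pa scale E q f" unfolding R_def by blast
    have "E (int N) (scale c x) = scale c v + pa scale E (smult c q) f"
      by (simp add: lin_scale[OF Elin] v pa_smult scale_right_distrib)
    then show "scale c x \<in> R" unfolding R_def using v U
      by (intro CollectI exI[of _ N] exI conjI) (auto intro: subspace_scale)
  qed
  have gensR: "x \<in> R" if xin: "x \<in> {E a g | a g. g \<in> insert f F}" for x
  proof -
    obtain a g where x: "x = E a g" and g: "g \<in> insert f F" using xin by blast
    show ?thesis
    proof (cases "g \<in> F")
      case True
      then have "x \<in> U" unfolding U_def x by (intro span_base) blast
      then show ?thesis unfolding R_def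
        by (intro CollectI exI[of _ 0] exI[of _ 0] exI[of _ x]) (simp add: E0 pa_zero)
    next
      case False
      then have gf: "g = f" using g by auto
      show ?thesis
      proof (cases "a \<ge> 0")
        case True
        have "E (int 0) x = 0 + pa scale E (monom 1 (nat a)) f" using True by (simp add: pa_monom x gf E0)
        then show ?thesis unfolding R_def using U subspace_0 by blast
      next
        case False
        have "E (int (nat (-a))) x = 0 + pa scale E [:1:] f" using False
          by (simp add: pa_const x gf Eadd[symmetric] E0)
        then show ?thesis unfolding R_def using U subspace_0 by blast
      qed
    qed
  qed
  have rep: "\<exists>N::nat. \<exists>q v'. v' \<in> U \<and> E (int N) u = v' + pa scale E q f" for u
  proof -
    have "u \<in> span {E a g | a g. g \<in> insert f F}" using insert.prems by simp
    then have "u \<in> R" using RS gensR by (rule span_subspace_induct)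
    then show ?thesis unfolding R_def by simp
  qed
  have fU: "f \<in> U" by (rule key_lemma[OF ac U Ustab rep sj])
  have "{E a g | a g. g \<in> insert f F} \<subseteq> U"
  proof
    fix x assume "x \<in> {E a g | a g. g \<in> insert f F}"
    then obtain a g where x: "x = E a g" and g: "g \<in> insert f F" by blast
    show "x \<in> U"
    proof (cases "g = f")
      case True then show ?thesis using fU Ustab x by simp
    next
      case False then show ?thesis using g x unfolding U_def by (intro span_base) blast
    qed
  qed
  then have "span {E a g | a g. g \<in> insert f F} \<subseteq> U" using U by (rule span_minimal)
  then have "span {E a g | a g. g \<in> F} = UNIV" using insert.prems unfolding U_def by auto
  then show ?case by (rule insert.IH)
qed

end
end


lemma lookup_cmul: "Poly_Mapping.lookup (cmul c p) k = c * Poly_Mapping.lookup p k"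
  unfolding cmul_def by transfer (simp add: when_def)

lemma keys_cmul_sub: "Poly_Mapping.keys (cmul c p) \<subseteq> Poly_Mapping.keys p"
  by (auto simp: in_keys_iff lookup_cmul)

lemma cmul_one: "cmul 1 p = p"
  by (rule poly_mapping_eqI) (simp add: lookup_cmul)

lemma keys_sum_sub: "Poly_Mapping.keys (sum b I) \<subseteq> (\<Union>i\<in>I. Poly_Mapping.keys (b i))"
proof (induction I rule: infinite_finite_induct)
  case (insert i I)
  then show ?case using keys_add[of "b i" "sum b I"] by auto
qed auto

lemma lin2_single: "lin2 f (Poly_Mapping.single u 1) (Poly_Mapping.single v 1) = f u v"
  unfolding lin2_def by (simp add: cmul_one)

lemma keys_lin2: "Poly_Mapping.keys (lin2 f p q) \<subseteq> (\<Union>u. \<Union>v. Poly_Mapping.keys (f u v))"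
proof
  fix x assume "x \<in> Poly_Mapping.keys (lin2 f p q)"
  then have "x \<in> (\<Union>u\<in>Poly_Mapping.keys p. Poly_Mapping.keys (\<Sum>v\<in>Poly_Mapping.keys q. cmul (Poly_Mapping.lookup p u * Poly_Mapping.lookup q v) (f u v)))"
    unfolding lin2_def by (rule subsetD[OF keys_sum_sub])
  then obtain u where "x \<in> Poly_Mapping.keys (\<Sum>v\<in>Poly_Mapping.keys q. cmul (Poly_Mapping.lookup p u * Poly_Mapping.lookup q v) (f u v))"
    by (rule UN_E)
  then have "x \<in> (\<Union>v\<in>Poly_Mapping.keys q. Poly_Mapping.keys (cmul (Poly_Mapping.lookup p u * Poly_Mapping.lookup q v) (f u v)))"
    by (rule subsetD[OF keys_sum_sub])
  then obtain v where "x \<in> Poly_Mapping.keys (cmul (Poly_Mapping.lookup p u * Poly_Mapping.lookup q v) (f u v))"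
    by (rule UN_E)
  then have "x \<in> Poly_Mapping.keys (f u v)" by (rule subsetD[OF keys_cmul_sub])
  then show "x \<in> (\<Union>u. \<Union>v. Poly_Mapping.keys (f u v))" by (intro UN_I[of u UNIV] UN_I[of v UNIV] UNIV_I)
qed

lemma keys_tens: "Poly_Mapping.keys (tens p q) \<subseteq> Poly_Mapping.keys p \<times> Poly_Mapping.keys q"
proof
  fix x assume "x \<in> Poly_Mapping.keys (tens p q)"
  then have "x \<in> (\<Union>u\<in>Poly_Mapping.keys p. Poly_Mapping.keys (\<Sum>v\<in>Poly_Mapping.keys q. Poly_Mapping.single (u, v) (Poly_Mapping.lookup p u * Poly_Mapping.lookup q v)))"
    unfolding tens_def by (rule subsetD[OF keys_sum_sub])
  then obtain u where u: "u \<in> Poly_Mapping.keys p"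
    and x0: "x \<in> Poly_Mapping.keys (\<Sum>v\<in>Poly_Mapping.keys q. Poly_Mapping.single (u, v) (Poly_Mapping.lookup p u * Poly_Mapping.lookup q v))"
    by (rule UN_E)
  from x0 have "x \<in> (\<Union>v\<in>Poly_Mapping.keys q. Poly_Mapping.keys (Poly_Mapping.single (u, v) (Poly_Mapping.lookup p u * Poly_Mapping.lookup q v)))"
    by (rule subsetD[OF keys_sum_sub])
  then obtain v where v: "v \<in> Poly_Mapping.keys q"
    and x: "x \<in> Poly_Mapping.keys (Poly_Mapping.single (u, v) (Poly_Mapping.lookup p u * Poly_Mapping.lookup q v))"
    by (rule UN_E)
  from x have "x = (u, v)" by (simp split: if_splits)
  then show "x \<in> Poly_Mapping.keys p \<times> Poly_Mapping.keys q" using u v by simp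
qed

lemma tens_single: "tens (Poly_Mapping.single u (1::'k::field)) (Poly_Mapping.single v 1) = Poly_Mapping.single (u, v) 1"
  unfolding tens_def by simp

lemma mon_single: "b < n \<Longrightarrow> c < n \<Longrightarrow> mon n w a b c = Poly_Mapping.single (a, b, c) 1"
  unfolding mon_def by simp

lemma keys_mon: "0 < n \<Longrightarrow> Poly_Mapping.keys (mon n w a b c :: Bidx \<Rightarrow>\<^sub>0 'k::field) \<subseteq> valid n"
proof
  fix x assume n0: "0 < n" and x0: "x \<in> Poly_Mapping.keys (mon n w a b c :: Bidx \<Rightarrow>\<^sub>0 'k::field)"
  from x0 have "x \<in> (\<Union>i\<le>c div n. Poly_Mapping.keys (Poly_Mapping.single
        (a + int w * int (b div n) + int w * int i, b mod n, c mod n)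
        (((-1) ^ i * of_nat (c div n choose i)) :: 'k)))"
    unfolding mon_def by (rule subsetD[OF keys_sum_sub])
  then obtain i where "x \<in> Poly_Mapping.keys (Poly_Mapping.single
        (a + int w * int (b div n) + int w * int i, b mod n, c mod n)
        (((-1) ^ i * of_nat (c div n choose i)) :: 'k))"
    by (rule UN_E)
  then have "x = (a + int w * int (b div n) + int w * int i, b mod n, c mod n)" by (simp split: if_splits)
  then show "x \<in> valid n" using n0 by (simp add: valid_def)
qed

lemma keys_bprod: "0 < n \<Longrightarrow> Poly_Mapping.keys (bprod n w \<gamma> u v) \<subseteq> valid n"
proof -
  assume n0: "0 < n"
  obtain a b c a' b' c' where uv: "u = (a, b, c)" "v = (a', b', c')" by (cases u, cases v) auto
  show ?thesis unfolding bprod_def uv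
    by (simp only: prod.case) (rule subset_trans[OF keys_cmul_sub keys_mon[OF n0]])
qed

lemma keys_hmul: "0 < n \<Longrightarrow> Poly_Mapping.keys (hmul n w \<gamma> p q) \<subseteq> valid n"
proof
  fix x assume n0: "0 < n" and x0: "x \<in> Poly_Mapping.keys (hmul n w \<gamma> p q)"
  from x0 have "x \<in> (\<Union>u. \<Union>v. Poly_Mapping.keys (bprod n w \<gamma> u v))"
    unfolding hmul_def by (rule subsetD[OF keys_lin2])
  then obtain u v where "x \<in> Poly_Mapping.keys (bprod n w \<gamma> u v)" by (elim UN_E)
  then show "x \<in> valid n" by (rule subsetD[OF keys_bprod[OF n0]])
qed

lemma hmul_Hset: "0 < n \<Longrightarrow> hmul n w \<gamma> p q \<in> Hset n"
  unfolding Hset_def by (simp add: keys_hmul)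

lemma single_Hset: "u \<in> valid n \<Longrightarrow> Poly_Mapping.single u (1::'k::field) \<in> Hset n"
  unfolding Hset_def by simp

lemma hmul_single: "hmul n w \<gamma> (Poly_Mapping.single u 1) (Poly_Mapping.single v 1) = bprod n w \<gamma> u v"
  unfolding hmul_def by (rule lin2_single)

lemma bprod_x: "b' < n \<Longrightarrow> c' < n \<Longrightarrow> bprod n w \<gamma> (a, 0, 0) (a', b', c') = Poly_Mapping.single (a + a', b', c') 1"
  unfolding bprod_def by (simp add: mon_single cmul_one)

lemma bprod_x2: "b' < n \<Longrightarrow> c' < n \<Longrightarrow> bprod n w \<gamma> (a', b', c') (a, 0, 0) = Poly_Mapping.single (a' + a, b', c') 1"
  unfolding bprod_def by (simp add: mon_single cmul_one)

lemma keys_tmul: "0 < n \<Longrightarrow> Poly_Mapping.keys (tmul n w \<gamma> p q) \<subseteq> valid n \<times> valid n"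
proof
  fix x assume n0: "0 < n" and x0: "x \<in> Poly_Mapping.keys (tmul n w \<gamma> p q)"
  have key: "Poly_Mapping.keys ((\<lambda>(u1, u2) (v1, v2). tens (bprod n w \<gamma> u1 v1) (bprod n w \<gamma> u2 v2)) u v) \<subseteq> valid n \<times> valid n" for u v
  proof -
    obtain u1 u2 v1 v2 where uv: "u = (u1, u2)" "v = (v1, v2)" by (cases u, cases v) auto
    have "Poly_Mapping.keys (tens (bprod n w \<gamma> u1 v1) (bprod n w \<gamma> u2 v2)) \<subseteq>
      Poly_Mapping.keys (bprod n w \<gamma> u1 v1) \<times> Poly_Mapping.keys (bprod n w \<gamma> u2 v2)" by (rule keys_tens)
    also have "\<dots> \<subseteq> valid n \<times> valid n"
      by (rule Sigma_mono[OF keys_bprod[OF n0] keys_bprod[OF n0]])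
    finally show ?thesis unfolding uv by (simp only: prod.case)
  qed
  from x0 have "x \<in> (\<Union>u. \<Union>v. Poly_Mapping.keys ((\<lambda>(u1, u2) (v1, v2). tens (bprod n w \<gamma> u1 v1) (bprod n w \<gamma> u2 v2)) u v))"
    unfolding tmul_def by (rule subsetD[OF keys_lin2])
  then obtain u v where "x \<in> Poly_Mapping.keys ((\<lambda>(u1, u2) (v1, v2). tens (bprod n w \<gamma> u1 v1) (bprod n w \<gamma> u2 v2)) u v)"
    by (elim UN_E)
  then show "x \<in> valid n \<times> valid n" by (rule subsetD[OF key])
qed

lemma keys_Delta: "0 < n \<Longrightarrow> Poly_Mapping.keys (Delta n w \<gamma> u) \<subseteq> valid n \<times> valid n"
proof -
  assume n0: "0 < n"
  obtain a b c where uu: "u = (a, b, c)" by (cases u) auto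
  show ?thesis unfolding Delta_def uu by (simp only: prod.case) (rule keys_tmul[OF n0])
qed

lemma tmul_single: "tmul n w \<gamma> (Poly_Mapping.single (u1, u2) 1) (Poly_Mapping.single (v1, v2) 1)
   = tens (bprod n w \<gamma> u1 v1) (bprod n w \<gamma> u2 v2)"
  unfolding tmul_def by (simp add: lin2_single)

lemma Delta_x: "0 < n \<Longrightarrow> Delta n w \<gamma> (a, 0, 0) = Poly_Mapping.single ((a, 0, 0), (a, 0, 0)) (1::'k::field)"
  unfolding Delta_def oneH_def
  by (simp add: mon_single tens_single tmul_single bprod_x)

lemma DeltaH_single: "DeltaH n w \<gamma> (Poly_Mapping.single u 1) = Delta n w \<gamma> u"
  unfolding DeltaH_def by (simp add: cmul_one)

lemma antipode_x: "0 < n \<Longrightarrow> antipode n w \<gamma> (a, 0, 0) = Poly_Mapping.single (- a, 0, 0) (1::'k::field)"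
  unfolding antipode_def oneH_def
  by (simp add: mon_single hmul_single bprod_x)

lemma act_single: "vector_space scale \<Longrightarrow> act scale actb (Poly_Mapping.single u 1) v = actb u v"
proof -
  assume "vector_space scale"
  then have "module scale" by (simp add: module_iff_vector_space)
  then show ?thesis unfolding act_def by (simp add: module.scale_one)
qed


context
  fixes n w :: nat and \<gamma> :: "'k::field"
    and scale :: "'k \<Rightarrow> 'v::ab_group_add \<Rightarrow> 'v"
    and actb :: "Bidx \<Rightarrow> 'v \<Rightarrow> 'v" and coact :: "'v \<Rightarrow> Bidx \<Rightarrow> 'v"
  assumes YD: "YD_module n w \<gamma> scale actb coact" and n0: "0 < n"
begin

lemmas Y = YD[unfolded YD_module_def]

lemma VS: "vector_space scale" by (rule conjunct1[OF Y])
lemma actb_lin: "u \<in> valid n \<Longrightarrow> Vector_Spaces.linear scale scale (actb u)"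
  using conjunct1[OF conjunct2[OF Y]] by (rule bspec)
lemma act_one: "act scale actb oneH v = v"
  using conjunct1[OF conjunct2[OF conjunct2[OF Y]]] by (rule spec)
lemma act_mul: "h \<in> Hset n \<Longrightarrow> h' \<in> Hset n \<Longrightarrow>
    act scale actb (hmul n w \<gamma> h h') v = act scale actb h (act scale actb h' v)"
  using conjunct1[OF conjunct2[OF conjunct2[OF conjunct2[OF Y]]]] by blast
lemmas Y5 = conjunct2[OF conjunct2[OF conjunct2[OF conjunct2[OF Y]]]]
lemma cs_fin: "finite (csupp coact v)" using conjunct1[OF Y5] by blast
lemma cs_valid: "csupp coact v \<subseteq> valid n" using conjunct1[OF Y5] by blast
lemma coact_lin: "Vector_Spaces.linear scale scale (\<lambda>v. coact v u)"
  using conjunct1[OF conjunct2[OF Y5]] by (rule spec)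
lemma counit: "(\<Sum>u\<in>csupp coact v. scale (eps u) (coact v u)) = v"
  using conjunct1[OF conjunct2[OF conjunct2[OF Y5]]] by (rule spec)
lemma coassoc: "coact (coact v u1) u2 = (\<Sum>u\<in>csupp coact v. scale (Poly_Mapping.lookup (Delta n w \<gamma> u) (u1, u2)) (coact v u))"
  using conjunct1[OF conjunct2[OF conjunct2[OF conjunct2[OF Y5]]]] by (metis (no_types))
lemma ydc: "h \<in> Hset n \<Longrightarrow> coact (act scale actb h v) s =
          (\<Sum>(p, q)\<in>Poly_Mapping.keys (DeltaH n w \<gamma> h). \<Sum>(p1, p2)\<in>Poly_Mapping.keys (Delta n w \<gamma> p). \<Sum>t\<in>csupp coact v.
              scale (Poly_Mapping.lookup (DeltaH n w \<gamma> h) (p, q) * Poly_Mapping.lookup (Delta n w \<gamma> p) (p1, p2)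
                     * Poly_Mapping.lookup (hmul n w \<gamma> (hmul n w \<gamma> (Poly_Mapping.single p1 1) (Poly_Mapping.single t 1))
                                 (antipode n w \<gamma> q)) s)
                    (actb p2 (coact v t)))"
  using conjunct2[OF conjunct2[OF conjunct2[OF conjunct2[OF Y5]]]] by blast

lemma MOD: "module scale" using VS by (simp add: module_iff_vector_space)

lemma actb_single: "actb u v = act scale actb (Poly_Mapping.single u 1) v"
  by (rule act_single[OF VS, symmetric])

lemma actb_comp:
  assumes u: "u \<in> valid n" and u': "u' \<in> valid n"
  shows "actb u' (actb u v) = act scale actb (bprod n w \<gamma> u' u) v"
proof -
  have "actb u' (actb u v) = act scale actb (Poly_Mapping.single u' 1) (act scale actb (Poly_Mapping.single u 1) v)"
    by (simp only: actb_single)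
  also have "\<dots> = act scale actb (hmul n w \<gamma> (Poly_Mapping.single u' 1) (Poly_Mapping.single u 1)) v"
    by (rule act_mul[symmetric]) (rule single_Hset, fact)+
  also have "\<dots> = act scale actb (bprod n w \<gamma> u' u) v"
    by (simp only: hmul_single)
  finally show ?thesis .
qed

lemma act_in_span:
  assumes "Poly_Mapping.keys h \<subseteq> S"
  shows "act scale actb h v \<in> module.span scale ((\<lambda>u. actb u v) ` S)"
  unfolding act_def
proof (intro module.span_sum[OF MOD] module.span_scale[OF MOD] module.span_base[OF MOD])
  fix x assume "x \<in> Poly_Mapping.keys h"
  then have "x \<in> S" using assms by (rule subsetD[rotated])
  then show "actb x v \<in> (\<lambda>u. actb u v) ` S" by (rule imageI)
qed

definition "EE a = actb (a, 0, 0)"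

lemma valid_x: "(a, 0, 0) \<in> valid n" using n0 by (simp add: valid_def)

lemma EE_lin: "Vector_Spaces.linear scale scale (EE a)"
  unfolding EE_def by (rule actb_lin[OF valid_x])

lemma EE0: "EE 0 v = v"
  using act_one[of v] unfolding oneH_def EE_def by (simp only: actb_single)

lemma EEadd: "EE (a + b) v = EE a (EE b v)"
  unfolding EE_def by (subst actb_comp[OF valid_x valid_x]) (simp only: bprod_x[OF n0 n0] actb_single)

lemma EE_actb:
  assumes u: "u \<in> valid n"
  shows "EE a (actb u v) = actb u (EE a v)"
proof -
  obtain a' b' c' where uu: "u = (a', b', c')" and b: "b' < n" and c: "c' < n"
    using u by (cases u) (auto simp: valid_def)
  have "EE a (actb u v) = act scale actb (Poly_Mapping.single (a + a', b', c') 1) v"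
    unfolding EE_def by (subst actb_comp[OF u valid_x]) (simp only: uu bprod_x[OF b c])
  also have "\<dots> = actb u (EE a v)"
    unfolding EE_def by (subst actb_comp[OF valid_x u]) (simp only: uu bprod_x2[OF b c] add.commute)
  finally show ?thesis .
qed

lemma actb_decomp:
  assumes b: "b < n" and c: "c < n"
  shows "actb (a, b, c) v = EE a (actb (0, b, c) v)"
proof -
  have u: "(0::int, b, c) \<in> valid n" using b c by (simp add: valid_def)
  show ?thesis unfolding EE_def
    by (subst actb_comp[OF u valid_x]) (simp only: bprod_x[OF b c] actb_single add_0_right)
qed

lemma coact_EE: "coact (EE a v) s = EE a (coact v s)"
proof -
  let ?X = "(a, 0::nat, 0::nat)"
  have h: "Poly_Mapping.single ?X (1::'k) \<in> Hset n" by (rule single_Hset[OF valid_x])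
  have D: "DeltaH n w \<gamma> (Poly_Mapping.single ?X 1) = Poly_Mapping.single (?X, ?X) (1::'k)"
    by (simp only: DeltaH_single Delta_x[OF n0])
  have hh: "hmul n w \<gamma> (hmul n w \<gamma> (Poly_Mapping.single ?X 1) (Poly_Mapping.single t 1))
                                 (antipode n w \<gamma> ?X) = Poly_Mapping.single t (1::'k)"
    if t: "t \<in> valid n" for t
  proof -
    obtain a' b' c' where tt: "t = (a', b', c')" and b: "b' < n" and c: "c' < n"
      using t by (cases t) (auto simp: valid_def)
    show ?thesis by (simp add: tt hmul_single bprod_x bprod_x2 b c antipode_x n0)
  qed
  have "coact (EE a v) s = coact (act scale actb (Poly_Mapping.single ?X 1) v) s"
    by (simp only: EE_def actb_single)
  also have "\<dots> = (\<Sum>t\<in>csupp coact v. scale (Poly_Mapping.lookup (hmul n w \<gamma> (hmul n w \<gamma> (Poly_Mapping.single ?X 1) (Poly_Mapping.single t 1))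
                                 (antipode n w \<gamma> ?X)) s) (actb ?X (coact v t)))"
    unfolding ydc[OF h] D by (simp add: Delta_x[OF n0])
  also have "\<dots> = (\<Sum>t\<in>csupp coact v. scale (Poly_Mapping.lookup (Poly_Mapping.single t (1::'k)) s) (EE a (coact v t)))"
    unfolding EE_def
  proof (rule sum.cong[OF refl])
    fix t assume "t \<in> csupp coact v"
    then have "t \<in> valid n" using cs_valid by (rule subsetD[rotated])
    then show "scale (Poly_Mapping.lookup (hmul n w \<gamma> (hmul n w \<gamma> (Poly_Mapping.single ?X 1) (Poly_Mapping.single t 1))
                                 (antipode n w \<gamma> ?X)) s) (actb ?X (coact v t)) =
          scale (Poly_Mapping.lookup (Poly_Mapping.single t (1::'k)) s) (actb ?X (coact v t))"
      by (simp only: hh)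
  qed
  also have "\<dots> = (\<Sum>t\<in>csupp coact v. if s = t then EE a (coact v t) else 0)"
    by (intro sum.cong refl) (simp add: lookup_single when_def module.scale_one[OF MOD] module.scale_zero_left[OF MOD])
  also have "\<dots> = EE a (coact v s)"
    using cs_fin lin_zero[OF EE_lin] by (simp add: csupp_def)
  finally show ?thesis .
qed

lemma span_image_sub:
  assumes f: "Vector_Spaces.linear scale scale f" and fS: "f ` S \<subseteq> T"
    and T: "module.subspace scale T" and x: "x \<in> module.span scale S"
  shows "f x \<in> T"
proof -
  have "f x \<in> f ` module.span scale S" using x by (rule imageI)
  also have "\<dots> = module.span scale (f ` S)" by (rule lin_span_image[OF f])
  also have "\<dots> \<subseteq> T" by (rule module.span_minimal[OF MOD fS T])
  finally show ?thesis .
qed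

lemma main:
  assumes ac: "alg_closed TYPE('k)" and nz: "(UNIV :: 'v set) \<noteq> {0}"
    and smp: "\<And>W. YD_submodule n scale actb coact W \<Longrightarrow> W = {0} \<or> W = UNIV"
  shows "\<exists>B. finite B \<and> module.span scale B = UNIV"
proof -
  interpret V: vector_space scale by (rule VS)
  obtain v0 :: 'v where v0: "v0 \<noteq> 0" using nz by auto
  define C where "C = (\<lambda>u. coact v0 u) ` csupp coact v0"
  define Gen where "Gen = {actb u c | u c. u \<in> valid n \<and> c \<in> C}"
  define W where "W = V.span Gen"
  have finC: "finite C" unfolding C_def using cs_fin by simp
  have WS: "V.subspace W" unfolding W_def by simp
  have GenI: "actb u c \<in> Gen" if "u \<in> valid n" "c \<in> C" for u c
    unfolding Gen_def by (rule CollectI, rule exI[of _ u], rule exI[of _ c]) (simp add: that)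
  have GenE: "\<exists>u c. g = actb u c \<and> u \<in> valid n \<and> c \<in> C" if "g \<in> Gen" for g
    using that unfolding Gen_def by (simp only: mem_Collect_eq)
  have GenW: "actb u c \<in> W" if "u \<in> valid n" "c \<in> C" for u c
    unfolding W_def by (rule V.span_base, rule GenI[OF that])
  have coactC: "coact c t \<in> V.span C" if c: "c \<in> C" for c t
  proof -
    obtain t0 where c0: "c = coact v0 t0" using c unfolding C_def by (rule imageE)
    show ?thesis unfolding c0 coassoc[of v0 t0 t]
    proof (intro V.span_sum V.span_scale V.span_base)
      fix u assume "u \<in> csupp coact v0"
      then show "coact v0 u \<in> C" unfolding C_def by (rule imageI)
    qed
  qed
  have coact_spanC: "coact x t \<in> V.span C" if "x \<in> V.span C" for x t
    by (rule span_image_sub[OF coact_lin _ V.subspace_span that]) (rule image_subsetI, erule coactC)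
  have actb_spanC: "actb p x \<in> W" if p: "p \<in> valid n" and x: "x \<in> V.span C" for p x
    by (rule span_image_sub[OF actb_lin[OF p] _ WS x]) (rule image_subsetI, erule GenW[OF p])
  have sub1: "actb u x \<in> W" if u: "u \<in> valid n" and x: "x \<in> W" for u x
  proof (rule span_image_sub[OF actb_lin[OF u] _ WS x[unfolded W_def]])
    show "actb u ` Gen \<subseteq> W"
    proof
      fix y assume "y \<in> actb u ` Gen"
      then obtain g where y0: "y = actb u g" and g: "g \<in> Gen" by (rule imageE)
      obtain u' c where "g = actb u' c \<and> u' \<in> valid n \<and> c \<in> C" using GenE[OF g] by (elim exE)
      then have y: "y = actb u (actb u' c)" and u': "u' \<in> valid n" and c: "c \<in> C" using y0 by simp_all
      have "y = act scale actb (bprod n w \<gamma> u u') c" unfolding y by (rule actb_comp[OF u' u])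
      also have "\<dots> \<in> V.span ((\<lambda>u. actb u c) ` valid n)"
        by (rule act_in_span[OF keys_bprod[OF n0]])
      also have "\<dots> \<subseteq> W" unfolding W_def
        by (rule V.span_mono, rule image_subsetI, erule GenI[OF _ c])
      finally show "y \<in> W" .
    qed
  qed
  have sub2: "coact x s \<in> W" if x: "x \<in> W" for x s
  proof (rule span_image_sub[OF coact_lin _ WS x[unfolded W_def]])
    show "(\<lambda>x. coact x s) ` Gen \<subseteq> W"
    proof
      fix y assume "y \<in> (\<lambda>x. coact x s) ` Gen"
      then obtain g where y0: "y = coact g s" and g: "g \<in> Gen" by (rule imageE)
      obtain u c where "g = actb u c \<and> u \<in> valid n \<and> c \<in> C" using GenE[OF g] by (elim exE)
      then have y: "y = coact (actb u c) s" and u: "u \<in> valid n" and c: "c \<in> C" using y0 by simp_all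
      have h: "Poly_Mapping.single u (1::'k) \<in> Hset n" by (rule single_Hset[OF u])
      have "y = coact (act scale actb (Poly_Mapping.single u 1) c) s" unfolding y by (simp only: actb_single)
      also have "\<dots> \<in> W" unfolding ydc[OF h] W_def
      proof (rule V.span_sum)
        fix pq assume "pq \<in> Poly_Mapping.keys (DeltaH n w \<gamma> (Poly_Mapping.single u (1::'k)))"
        obtain p q where pq: "pq = (p, q)" by (cases pq)
        show "(case pq of (p, q) \<Rightarrow> \<Sum>(p1, p2)\<in>Poly_Mapping.keys (Delta n w \<gamma> p). \<Sum>t\<in>csupp coact c.
              scale (Poly_Mapping.lookup (DeltaH n w \<gamma> (Poly_Mapping.single u 1)) (p, q) * Poly_Mapping.lookup (Delta n w \<gamma> p) (p1, p2)
                     * Poly_Mapping.lookup (hmul n w \<gamma> (hmul n w \<gamma> (Poly_Mapping.single p1 1) (Poly_Mapping.single t 1))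
                                 (antipode n w \<gamma> q)) s)
                    (actb p2 (coact c t))) \<in> V.span Gen"
          unfolding pq prod.case
        proof (rule V.span_sum)
          fix pp assume pp: "pp \<in> Poly_Mapping.keys (Delta n w \<gamma> p)"
          obtain p1 p2 where pp12: "pp = (p1, p2)" by (cases pp)
          have p2: "p2 \<in> valid n" using subsetD[OF keys_Delta[OF n0] pp] unfolding pp12 by simp
          show "(case pp of (p1, p2) \<Rightarrow> \<Sum>t\<in>csupp coact c.
              scale (Poly_Mapping.lookup (DeltaH n w \<gamma> (Poly_Mapping.single u 1)) (p, q) * Poly_Mapping.lookup (Delta n w \<gamma> p) (p1, p2)
                     * Poly_Mapping.lookup (hmul n w \<gamma> (hmul n w \<gamma> (Poly_Mapping.single p1 1) (Poly_Mapping.single t 1))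
                                 (antipode n w \<gamma> q)) s)
                    (actb p2 (coact c t))) \<in> V.span Gen"
            unfolding pp12 prod.case
          proof (intro V.span_sum V.span_scale)
            fix t
            show "actb p2 (coact c t) \<in> V.span Gen"
              using actb_spanC[OF p2 coactC[OF c]] unfolding W_def .
          qed
        qed
      qed
      finally show "y \<in> W" .
    qed
  qed
  have Wsub: "YD_submodule n scale actb coact W"
    unfolding YD_submodule_def
  proof (intro conjI WS ballI allI)
    show "actb u x \<in> W" if "u \<in> valid n" "x \<in> W" for u x using sub1 that by simp
    show "coact x u \<in> W" if "x \<in> W" for x u using sub2 that by simp
  qed
  have v0W: "v0 \<in> W"
  proof -
    have "(\<Sum>u\<in>csupp coact v0. scale (eps u) (coact v0 u)) \<in> W"
      unfolding W_def
    proof (intro V.span_sum V.span_scale)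
      fix u assume u: "u \<in> csupp coact v0"
      have "coact v0 u = actb (0, 0, 0) (coact v0 u)" using EE0[of "coact v0 u"] by (simp add: EE_def)
      also have "\<dots> \<in> V.span Gen"
        using GenW[OF valid_x, of "coact v0 u" 0] u unfolding W_def C_def by simp
      finally show "coact v0 u \<in> V.span Gen" .
    qed
    then show ?thesis by (simp only: counit)
  qed
  have WU: "W = UNIV"
  proof -
    have "W \<noteq> {0}" using v0W v0 by auto
    then show ?thesis using smp[OF Wsub] by simp
  qed
  define F where "F = (\<lambda>(b, c, x). actb (0, b, c) x) ` ({..<n} \<times> {..<n} \<times> C)"
  have finF: "finite F" unfolding F_def using finC by simp
  have spanE: "V.span {EE a f | a f. f \<in> F} = UNIV"
  proof -
    have "Gen \<subseteq> {EE a f | a f. f \<in> F}"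
    proof
      fix y assume "y \<in> Gen"
      then have "\<exists>u c. y = actb u c \<and> u \<in> valid n \<and> c \<in> C" by (rule GenE)
      then obtain u x where "y = actb u x \<and> u \<in> valid n \<and> x \<in> C" by (elim exE)
      moreover obtain a b c where "u = (a, b, c)" by (cases u)
      ultimately have y: "y = actb (a, b, c) x" and b: "b < n" and c: "c < n" and x: "x \<in> C"
        by (simp_all add: valid_def)
      have "y = EE a (actb (0, b, c) x)" unfolding y by (rule actb_decomp[OF b c])
      moreover have "actb (0, b, c) x \<in> F" unfolding F_def using b c x
        by (intro image_eqI[where x="(b, c, x)"]) auto
      ultimately show "y \<in> {EE a f | a f. f \<in> F}" by (intro CollectI exI conjI)
    qed
    then have "W \<subseteq> V.span {EE a f | a f. f \<in> F}" unfolding W_def by (rule V.span_mono)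
    then show ?thesis using WU by auto
  qed
  show ?thesis
  proof (cases "\<exists>c. \<forall>x. EE 1 x = scale c x")
    case True
    then obtain c where c: "\<And>x. EE 1 x = scale c x" by auto
    have inv: "x = scale c (EE (-1) x)" for x
      using EEadd[of 1 "-1" x] EE0[of x] c[of "EE (-1) x"] by simp
    have c0: "c \<noteq> 0"
    proof
      assume "c = 0"
      then have "v0 = 0" using inv[of v0] by simp
      then show False using v0 by simp
    qed
    have EEm: "EE (-1) x = scale (inverse c) x" for x
    proof -
      have "scale (inverse c) x = scale (inverse c) (scale c (EE (-1) x))" using inv[of x] by simp
      also have "\<dots> = EE (-1) x" using c0 by simp
      finally show ?thesis by simp
    qed
    have Ein: "EE i f \<in> V.span F" if f: "f \<in> F" for i f
    proof (induction i rule: int_induct[where k=0])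
      case base
      show ?case using f by (simp add: EE0 V.span_base)
    next
      case (step1 i)
      have "EE (i + 1) f = scale c (EE i f)" using EEadd[of 1 i f] c by (simp add: add.commute)
      then show ?case using step1.IH by (simp add: V.span_scale)
    next
      case (step2 i)
      have "EE (i - 1) f = scale (inverse c) (EE i f)" using EEadd[of "-1" i f] EEm by simp
      then show ?case using step2.IH by (simp add: V.span_scale)
    qed
    have "V.span {EE a f | a f. f \<in> F} \<subseteq> V.span F"
    proof (rule V.span_minimal[OF _ V.subspace_span])
      show "{EE a f | a f. f \<in> F} \<subseteq> V.span F"
      proof
        fix y assume "y \<in> {EE a f | a f. f \<in> F}"
        then obtain a f where "y = EE a f \<and> f \<in> F" by (simp only: mem_Collect_eq) (elim exE)
        then show "y \<in> V.span F" using Ein by simp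
      qed
    qed
    then have "V.span F = UNIV" using spanE by auto
    then show ?thesis using finF by (intro exI conjI)
  next
    case False
    have sj: "\<exists>u. y = EE 1 u - scale c u" for c y
    proof -
      define L where "L = (\<lambda>x. EE 1 x - scale c x)"
      define Im where "Im = range L"
      have Ladd: "L (x + z) = L x + L z" for x z
        unfolding L_def by (simp add: lin_add[OF EE_lin] V.scale_right_distrib)
      have Lsc: "L (scale d x) = scale d (L x)" for d x
        unfolding L_def by (simp add: lin_scale[OF EE_lin] V.scale_right_diff_distrib mult.commute)
      have L0: "L 0 = 0" unfolding L_def by (simp add: lin_zero[OF EE_lin])
      have ImS: "V.subspace Im" unfolding V.subspace_def Im_def
      proof (intro conjI ballI allI)
        show "0 \<in> range L" using L0[symmetric] by (rule image_eqI) (rule UNIV_I)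
      next
        fix x z assume "x \<in> range L" "z \<in> range L"
        then obtain a b where "x = L a" "z = L b" by (elim imageE)
        then have "x + z = L (a + b)" by (simp add: Ladd)
        then show "x + z \<in> range L" by (metis rangeI)
      next
        fix d x assume "x \<in> range L"
        then obtain a where "x = L a" by (elim imageE)
        then have "scale d x = L (scale d a)" by (simp add: Lsc)
        then show "scale d x \<in> range L" by (metis rangeI)
      qed
      have act_L: "actb u (L x) = L (actb u x)" if u: "u \<in> valid n" for u x
        unfolding L_def by (simp add: lin_diff[OF actb_lin[OF u]] lin_scale[OF actb_lin[OF u]] EE_actb[OF u])
      have coact_L: "coact (L x) s = L (coact x s)" for x s
        unfolding L_def by (simp add: lin_diff[OF coact_lin] lin_scale[OF coact_lin] coact_EE)
      have ImSub: "YD_submodule n scale actb coact Im"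
        unfolding YD_submodule_def
      proof (intro conjI ImS ballI allI)
        fix u x assume u: "u \<in> valid n" and "x \<in> Im"
        then obtain a where "x = L a" unfolding Im_def by (elim imageE)
        then have "actb u x = L (actb u a)" by (simp add: act_L[OF u])
        then show "actb u x \<in> Im" unfolding Im_def by (metis rangeI)
      next
        fix x u assume "x \<in> Im"
        then obtain a where "x = L a" unfolding Im_def by (elim imageE)
        then have "coact x u = L (coact a u)" by (simp add: coact_L)
        then show "coact x u \<in> Im" unfolding Im_def by (metis rangeI)
      qed
      obtain x where "EE 1 x \<noteq> scale c x" using False by auto
      then have "L x \<noteq> 0" unfolding L_def by simp
      then have "Im \<noteq> {0}" unfolding Im_def by (metis rangeI singletonD)
      then have "Im = UNIV" using smp[OF ImSub] by simp
      then have "y \<in> range L" unfolding Im_def by simp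
      then obtain u where "y = L u" by (elim imageE)
      then show ?thesis unfolding L_def by (intro exI)
    qed
    have "(UNIV :: 'v set) = {0}"
      by (rule V.fin_gen_zero[OF EE_lin EE0 EEadd ac finF spanE sj])
    then show ?thesis using nz by simp
  qed
qed

end


theorem proposition3p1:
  fixes n w :: nat and \<gamma> :: "'k::field_char_0"
    and scale :: "'k \<Rightarrow> 'v::ab_group_add \<Rightarrow> 'v"
    and actb :: "Bidx \<Rightarrow> 'v \<Rightarrow> 'v" and coact :: "'v \<Rightarrow> Bidx \<Rightarrow> 'v"
  assumes "alg_closed TYPE('k)"
    and "0 < n" and "0 < w"
    and "\<gamma> ^ n = 1" and "\<forall>m. 0 < m \<and> m < n \<longrightarrow> \<gamma> ^ m \<noteq> 1"
    and "simple_YD n w \<gamma> scale actb coact"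
  shows "\<exists>B. finite B \<and> module.span scale B = UNIV"
proof -
  have YD: "YD_module n w \<gamma> scale actb coact"
    and nz: "(UNIV :: 'v set) \<noteq> {0}"
    and smp: "\<forall>W. YD_submodule n scale actb coact W \<longrightarrow> W = {0} \<or> W = UNIV"
    using assms(6) unfolding simple_YD_def by simp_all
  show ?thesis
    by (rule main[OF YD assms(2) assms(1) nz]) (simp add: smp)
qed

end
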